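(* Let $X$ be a finite set with $|X|\ge5$, $k$ an integer with $5<k<|X|-5$, $\mathfrak{C}$ a nonempty symmetric family of choice functions for $\binom{X}{k}$, $\mathcal{F}$ the set of simple averaging functions for $\mathfrak{C}$, and assume $r(\mathcal{F})=2$. Let $a^*_1\ne a^*_2$ be elements of $X$. Then there is $f^*\in\mathcal{F}_{[2]}$ such that: $f^*(a^*_1,a^*_2)=a^*_2$; for $b_1\ne b_2$ with $\{b_1,b_2\}\subseteq\{a^*_1,a^*_2\}$, $f^*(b_1,b_2)=b_2$; and for $b_1\ne b_2$ with $\{b_1,b_2\}\not\subseteq\{a^*_1,a^*_2\}$, $f^*(b_1,b_2)=b_1$.
   Context: $\binom{X}{k}=\{Y\subseteq X:|Y|=k\}$; choice functions satisfy $c(Y)\in Y$. Symmetric: closed under $c\mapsto\pi*c$, $(\pi*c)(Y)=\pi^{-1}(c(\pi(Y)))$. $\mathcal{F}_{[r]}$: functions $f:X^r\to X$ with $f(a,\dots,a)=a$ such that for all $c_1,\dots,c_r\in\mathfrak{C}$, $Y\mapsto f(c_1(Y),\dots,c_r(Y))$ is in $\mathfrak{C}$. A monarchy is a projection. $r(\mathcal{F})=\min\{r:\text{some } f\in\mathcal{F}_{[r]}\text{ is not a monarchy}\}$. *)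

theory Defs
  imports Main
begin

definition ksubsets :: "'a set \<Rightarrow> nat \<Rightarrow> 'a set set" where
  "ksubsets X k = {Y. Y \<subseteq> X \<and> card Y = k}"

text \<open>Choice functions for the k-subsets of X, made extensional (undefined
  outside the domain) so that equality of choice functions is meaningful.\<close>
definition choice_fun :: "'a set \<Rightarrow> nat \<Rightarrow> ('a set \<Rightarrow> 'a) \<Rightarrow> bool" where
  "choice_fun X k c \<longleftrightarrow> (\<forall>Y \<in> ksubsets X k. c Y \<in> Y) \<and> (\<forall>Y. Y \<notin> ksubsets X k \<longrightarrow> c Y = undefined)"

definition perm_act :: "'a set \<Rightarrow> nat \<Rightarrow> ('a \<Rightarrow> 'a) \<Rightarrow> ('a set \<Rightarrow> 'a) \<Rightarrow> ('a set \<Rightarrow> 'a)" where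
  "perm_act X k \<pi> c = (\<lambda>Y. if Y \<in> ksubsets X k then inv_into X \<pi> (c (\<pi> ` Y)) else undefined)"

definition symmetric_family :: "'a set \<Rightarrow> nat \<Rightarrow> ('a set \<Rightarrow> 'a) set \<Rightarrow> bool" where
  "symmetric_family X k C \<longleftrightarrow> (\<forall>c \<in> C. choice_fun X k c) \<and>
     (\<forall>\<pi> c. bij_betw \<pi> X X \<and> c \<in> C \<longrightarrow> perm_act X k \<pi> c \<in> C)"

text \<open>r-tuples over X are lists of length r with entries in X; functions
  X^r -> X are extensional functions on such lists.\<close>
definition tuples :: "'a set \<Rightarrow> nat \<Rightarrow> 'a list set" where
  "tuples X r = {xs. length xs = r \<and> set xs \<subseteq> X}"

definition avg_funs :: "'a set \<Rightarrow> nat \<Rightarrow> ('a set \<Rightarrow> 'a) set \<Rightarrow> nat \<Rightarrow> ('a list \<Rightarrow> 'a) set" where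
  "avg_funs X k C r = {f.
     (\<forall>xs \<in> tuples X r. f xs \<in> X) \<and> (\<forall>xs. xs \<notin> tuples X r \<longrightarrow> f xs = undefined) \<and>
     (\<forall>a \<in> X. f (replicate r a) = a) \<and>
     (\<forall>cs. length cs = r \<and> set cs \<subseteq> C \<longrightarrow>
        (\<lambda>Y. if Y \<in> ksubsets X k then f (map (\<lambda>c. c Y) cs) else undefined) \<in> C)}"

definition monarchy :: "'a set \<Rightarrow> nat \<Rightarrow> ('a list \<Rightarrow> 'a) \<Rightarrow> bool" where
  "monarchy X r f \<longleftrightarrow> (\<exists>i < r. \<forall>xs \<in> tuples X r. f xs = xs ! i)"

text \<open>r(F): least arity admitting a non-monarchy (0 if none exists; 0 is
  never the least such arity when |X| >= 2, since F_[0] is then empty).\<close>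
definition r_F :: "'a set \<Rightarrow> nat \<Rightarrow> ('a set \<Rightarrow> 'a) set \<Rightarrow> nat" where
  "r_F X k C = (if \<exists>r. \<exists>f \<in> avg_funs X k C r. \<not> monarchy X r f
     then LEAST r. \<exists>f \<in> avg_funs X k C r. \<not> monarchy X r f else 0)"

end

theory Submission
  imports Defs "HOL-Combinatorics.Transposition"
begin

definition projf :: "'a set \<Rightarrow> nat \<Rightarrow> 'a list \<Rightarrow> 'a" where
  "projf X i = (\<lambda>xs. if xs \<in> tuples X 2 then xs ! i else undefined)"
definition compf :: "'a set \<Rightarrow> ('a list \<Rightarrow> 'a) \<Rightarrow> ('a list \<Rightarrow> 'a) \<Rightarrow> ('a list \<Rightarrow> 'a) \<Rightarrow> 'a list \<Rightarrow> 'a" where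
  "compf X f g h = (\<lambda>xs. if xs \<in> tuples X 2 then f [g xs, h xs] else undefined)"
definition conjf :: "'a set \<Rightarrow> ('a \<Rightarrow> 'a) \<Rightarrow> ('a list \<Rightarrow> 'a) \<Rightarrow> 'a list \<Rightarrow> 'a" where
  "conjf X p f = (\<lambda>xs. if xs \<in> tuples X 2 then inv_into X p (f (map p xs)) else undefined)"

lemma tuples2: "[x,y] \<in> tuples X 2 \<longleftrightarrow> x \<in> X \<and> y \<in> X"
  by (auto simp: tuples_def)

lemma len2: "length cs = 2 \<Longrightarrow> \<exists>c1 c2. cs = [c1,c2]"
  by (auto simp: numeral_2_eq_2 length_Suc_conv)

lemma tuples2E: "xs \<in> tuples X 2 \<Longrightarrow> \<exists>x y. xs = [x,y] \<and> x \<in> X \<and> y \<in> X"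
  by (auto simp: tuples_def dest!: len2)

lemma perm_exists:
  "distinct xs \<Longrightarrow> distinct ys \<Longrightarrow> length xs = length ys \<Longrightarrow> set xs \<subseteq> X \<Longrightarrow> set ys \<subseteq> X
   \<Longrightarrow> \<exists>p. bij_betw p X X \<and> map p xs = ys"
proof (induction xs arbitrary: ys)
  case Nil
  then show ?case using bij_betw_id[unfolded id_def] by (intro exI[of _ id]) auto
next
  case (Cons x xs)
  then obtain y ys' where ys: "ys = y # ys'" by (cases ys) auto
  with Cons obtain p where p: "bij_betw p X X" "map p xs = ys'" by auto
  define s where "s = Transposition.transpose (p x) y \<circ> p"
  have px: "p x \<in> X" using p Cons.prems bij_betwE by fastforce
  have yX: "y \<in> X" using Cons.prems ys by auto
  have bs: "bij_betw s X X" unfolding s_def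
    using bij_betw_trans[OF p(1), of "Transposition.transpose (p x) y" X] px yX by simp
  have "p x \<notin> set ys'"
  proof
    assume "p x \<in> set ys'"
    then obtain z where z: "z \<in> set xs" "p z = p x" using p(2) by auto
    have "z = x" using bij_betw_imp_inj_on[OF p(1)] z Cons.prems
      by (meson inj_onD list.set_intros subsetD)
    then show False using z Cons.prems by auto
  qed
  moreover have "y \<notin> set ys'" using Cons.prems ys by auto
  ultimately have "map (Transposition.transpose (p x) y) ys' = ys'"
    by (intro map_idI) (metis transpose_apply_other)
  then have "map s xs = ys'" unfolding s_def using p(2) by (metis map_map)
  moreover have "s x = y" by (simp add: s_def)
  ultimately show ?case using bs ys by (intro exI[of _ s]) simp
qed

lemma card_sub_between:
  assumes "finite A" "B \<subseteq> A" "card B \<le> n" "n \<le> card A"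
  shows "\<exists>Y. B \<subseteq> Y \<and> Y \<subseteq> A \<and> card Y = n"
proof -
  have "n - card B \<le> card (A - B)" using assms by (simp add: card_Diff_subset finite_subset)
  then obtain T where T: "T \<subseteq> A - B" "card T = n - card B" "finite T"
    by (metis obtain_subset_with_card_n)
  have "card (B \<union> T) = card B + card T"
    using T assms by (intro card_Un_disjoint) (auto intro: finite_subset)
  then have "card (B \<union> T) = n" using T(2) assms(3) by simp
  moreover have "B \<union> T \<subseteq> A" using T(1) assms(2) by blast
  ultimately show ?thesis by blast
qed

lemma fresh: "finite X \<Longrightarrow> length l < card X \<Longrightarrow> \<exists>z\<in>X. z \<notin> set l"
proof (rule ccontr)
  assume f: "finite X" and l: "length l < card X" and "\<not> (\<exists>z\<in>X. z \<notin> set l)"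
  then have "X \<subseteq> set l" by blast
  then have "card X \<le> card (set l)" by (simp add: card_mono)
  also have "\<dots> \<le> length l" by (rule card_length)
  finally show False using l by simp
qed


locale cfs =
  fixes X :: "'a set" and k :: nat and C :: "('a set \<Rightarrow> 'a) set"
  assumes fin: "finite X" and k2: "2 \<le> k" and kX: "k < card X" and X6: "6 \<le> card X"
    and Cne: "C \<noteq> {}" and sym: "symmetric_family X k C"
begin

abbreviation "F2 \<equiv> avg_funs X k C 2"

lemma C_val: "c \<in> C \<Longrightarrow> Y \<in> ksubsets X k \<Longrightarrow> c Y \<in> Y"
  using sym by (auto simp: symmetric_family_def choice_fun_def)

lemma C_valX: "c \<in> C \<Longrightarrow> Y \<in> ksubsets X k \<Longrightarrow> c Y \<in> X"
  using C_val by (auto simp: ksubsets_def)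

lemma C_ext: "c \<in> C \<Longrightarrow> Y \<notin> ksubsets X k \<Longrightarrow> c Y = undefined"
  using sym by (auto simp: symmetric_family_def choice_fun_def)

lemma C_perm: "c \<in> C \<Longrightarrow> bij_betw p X X \<Longrightarrow> perm_act X k p c \<in> C"
  using sym by (auto simp: symmetric_family_def)

lemma F2_X: "f \<in> F2 \<Longrightarrow> x \<in> X \<Longrightarrow> y \<in> X \<Longrightarrow> f [x,y] \<in> X"
  by (auto simp: avg_funs_def tuples2)

lemma F2_idem: "f \<in> F2 \<Longrightarrow> x \<in> X \<Longrightarrow> f [x,x] = x"
  unfolding avg_funs_def by (auto simp: numeral_2_eq_2)

lemma F2_C: "f \<in> F2 \<Longrightarrow> c1 \<in> C \<Longrightarrow> c2 \<in> C \<Longrightarrow>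
   (\<lambda>Y. if Y \<in> ksubsets X k then f [c1 Y, c2 Y] else undefined) \<in> C"
proof -
  assume a: "f \<in> F2" "c1 \<in> C" "c2 \<in> C"
  then have "\<forall>cs. length cs = 2 \<and> set cs \<subseteq> C \<longrightarrow>
        (\<lambda>Y. if Y \<in> ksubsets X k then f (map (\<lambda>c. c Y) cs) else undefined) \<in> C"
    unfolding avg_funs_def by blast
  from this[rule_format, of "[c1,c2]"] a show ?thesis by (simp cong: if_cong)
qed

lemma map_tuples: "set cs \<subseteq> C \<Longrightarrow> length cs = 2 \<Longrightarrow> Y \<in> ksubsets X k \<Longrightarrow> map (\<lambda>c. c Y) cs \<in> tuples X 2"
  using C_valX by (auto simp: tuples_def)

lemma proj_in: "i < 2 \<Longrightarrow> projf X i \<in> F2"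
proof -
  assume i: "i < 2"
  have "(\<lambda>Y. if Y \<in> ksubsets X k then projf X i (map (\<lambda>c. c Y) cs) else undefined) \<in> C"
    if cs: "length cs = 2" "set cs \<subseteq> C" for cs
  proof -
    have "(\<lambda>Y. if Y \<in> ksubsets X k then projf X i (map (\<lambda>c. c Y) cs) else undefined) = cs ! i"
    proof
      fix Y show "(if Y \<in> ksubsets X k then projf X i (map (\<lambda>c. c Y) cs) else undefined) = (cs ! i) Y"
      proof -
        have ci: "cs ! i \<in> C" using cs i nth_mem[of i cs] by auto
        show ?thesis
        using map_tuples[OF cs(2,1)] C_ext[OF ci, of Y] cs i
        by (auto simp: projf_def)
      qed
    qed
    then show ?thesis using cs i nth_mem[of i cs] by auto
  qed
  moreover have "\<forall>xs\<in>tuples X 2. projf X i xs \<in> X"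
    using i by (auto simp: projf_def tuples_def)
  moreover have "\<forall>xs. xs \<notin> tuples X 2 \<longrightarrow> projf X i xs = undefined" by (simp add: projf_def)
  moreover have "\<forall>a\<in>X. projf X i (replicate 2 a) = a" using i by (auto simp: projf_def tuples_def)
  ultimately show ?thesis unfolding avg_funs_def by blast
qed

lemma comp_in:
  assumes f: "f \<in> F2" and g: "g \<in> F2" and h: "h \<in> F2"
  shows "compf X f g h \<in> F2"
proof -
  have gX: "\<forall>xs\<in>tuples X 2. g xs \<in> X" "\<forall>xs\<in>tuples X 2. h xs \<in> X" "\<forall>xs\<in>tuples X 2. f xs \<in> X"
    using f g h by (auto simp: avg_funs_def)
  have "(\<lambda>Y. if Y \<in> ksubsets X k then compf X f g h (map (\<lambda>c. c Y) cs) else undefined) \<in> C"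
    if cs: "length cs = 2" "set cs \<subseteq> C" for cs
  proof -
    define G where "G = (\<lambda>Y. if Y \<in> ksubsets X k then g (map (\<lambda>c. c Y) cs) else undefined)"
    define H where "H = (\<lambda>Y. if Y \<in> ksubsets X k then h (map (\<lambda>c. c Y) cs) else undefined)"
    have GC: "G \<in> C" "H \<in> C" using g h cs unfolding G_def H_def avg_funs_def by auto
    have "(\<lambda>Y. if Y \<in> ksubsets X k then f [G Y, H Y] else undefined) \<in> C"
      using F2_C[OF f GC] .
    moreover have "(\<lambda>Y. if Y \<in> ksubsets X k then f [G Y, H Y] else undefined) =
       (\<lambda>Y. if Y \<in> ksubsets X k then compf X f g h (map (\<lambda>c. c Y) cs) else undefined)"
      using map_tuples[OF cs(2,1)] by (auto simp: G_def H_def compf_def)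
    ultimately show ?thesis by simp
  qed
  moreover have "\<forall>xs\<in>tuples X 2. compf X f g h xs \<in> X"
    using gX by (auto simp: compf_def tuples2)
  moreover have "\<forall>a\<in>X. compf X f g h (replicate 2 a) = a"
  proof
    fix a assume a: "a \<in> X"
    have "g [a,a] = a" "h [a,a] = a" "f [a,a] = a" using F2_idem f g h a by auto
    then show "compf X f g h (replicate 2 a) = a" using a by (simp add: compf_def numeral_2_eq_2 tuples_def)
  qed
  moreover have "\<forall>xs. xs \<notin> tuples X 2 \<longrightarrow> compf X f g h xs = undefined" by (simp add: compf_def)
  ultimately show ?thesis unfolding avg_funs_def by blast
qed

lemma ks_image: "bij_betw p X X \<Longrightarrow> Y \<in> ksubsets X k \<Longrightarrow> p ` Y \<in> ksubsets X k"
  unfolding ksubsets_def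
  by (metis (mono_tags, lifting) bij_betw_def card_image image_mono inj_on_subset mem_Collect_eq)

lemma conj_in:
  assumes f: "f \<in> F2" and p: "bij_betw p X X"
  shows "conjf X p f \<in> F2"
proof -
  define s where "s = inv_into X p"
  have s: "bij_betw s X X" using bij_betw_inv_into[OF p] s_def by simp
  have injp: "inj_on p X" and injs: "inj_on s X" using p s bij_betw_imp_inj_on by auto
  have pX: "\<And>x. x \<in> X \<Longrightarrow> p x \<in> X" and sX: "\<And>x. x \<in> X \<Longrightarrow> s x \<in> X"
    using p s bij_betwE by blast+
  have sp: "\<And>x. x \<in> X \<Longrightarrow> s (p x) = x" using p s_def bij_betw_inv_into_left by fastforce
  have inv_s: "\<And>z. z \<in> X \<Longrightarrow> inv_into X s z = p z"
    using injs sp pX by (intro inv_into_f_eq) auto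
  have "(\<lambda>Y. if Y \<in> ksubsets X k then conjf X p f (map (\<lambda>c. c Y) cs) else undefined) \<in> C"
    if cs: "length cs = 2" "set cs \<subseteq> C" for cs
  proof -
    obtain c1 c2 where c: "cs = [c1,c2]" using len2[OF cs(1)] by auto
    have cC: "c1 \<in> C" "c2 \<in> C" using cs c by auto
    define d1 where "d1 = perm_act X k s c1"
    define d2 where "d2 = perm_act X k s c2"
    have dC: "d1 \<in> C" "d2 \<in> C" using C_perm cC s d1_def d2_def by auto
    define h where "h = (\<lambda>Y. if Y \<in> ksubsets X k then f [d1 Y, d2 Y] else undefined)"
    have hC: "h \<in> C" using F2_C[OF f dC] h_def by simp
    have "perm_act X k p h = (\<lambda>Y. if Y \<in> ksubsets X k then conjf X p f (map (\<lambda>c. c Y) cs) else undefined)"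
    proof
      fix Y
      show "perm_act X k p h Y = (if Y \<in> ksubsets X k then conjf X p f (map (\<lambda>c. c Y) cs) else undefined)"
      proof (cases "Y \<in> ksubsets X k")
        case True
        have YX: "Y \<subseteq> X" using True by (auto simp: ksubsets_def)
        have pY: "p ` Y \<in> ksubsets X k" using ks_image[OF p True] .
        have spY: "s ` p ` Y = Y" using YX injp s_def by simp
        have d: "d1 (p ` Y) = p (c1 Y)" "d2 (p ` Y) = p (c2 Y)"
          using pY spY inv_s C_valX cC True by (auto simp: d1_def d2_def perm_act_def)
        have "c1 Y \<in> X" "c2 Y \<in> X" using C_valX cC True by auto
        then show ?thesis using True pY d
          by (simp add: perm_act_def h_def conjf_def c tuples2 s_def)
      qed (simp add: perm_act_def)
    qed
    then show ?thesis using C_perm[OF hC p] by simp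
  qed
  moreover have "\<forall>xs\<in>tuples X 2. conjf X p f xs \<in> X"
  proof
    fix xs assume xs: "xs \<in> tuples X 2"
    then obtain x y where "xs = [x,y]" "x \<in> X" "y \<in> X" using tuples2E by blast
    then have "f (map p xs) \<in> X" using F2_X[OF f] pX by auto
    then show "conjf X p f xs \<in> X" using xs sX by (simp add: conjf_def s_def)
  qed
  moreover have "\<forall>a\<in>X. conjf X p f (replicate 2 a) = a"
  proof
    fix a assume a: "a \<in> X"
    have "f [p a, p a] = p a" using F2_idem[OF f] pX a by auto
    then show "conjf X p f (replicate 2 a) = a" using a sp
      by (simp add: conjf_def numeral_2_eq_2 tuples_def s_def)
  qed
  moreover have "\<forall>xs. xs \<notin> tuples X 2 \<longrightarrow> conjf X p f xs = undefined" by (simp add: conjf_def)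
  ultimately show ?thesis unfolding avg_funs_def mem_Collect_eq
    apply (intro conjI)
       apply assumption
      apply assumption
     apply assumption
    apply (intro allI impI)
    apply (elim conjE)
    apply (drule meta_spec)
    apply (drule (1) meta_mp)
    apply (drule (1) meta_mp)
    apply assumption
    done
qed

lemma conservative:
  assumes f: "f \<in> F2" and x: "x \<in> X" and y: "y \<in> X"
  shows "f [x,y] = x \<or> f [x,y] = y"
proof (rule ccontr)
  assume ne: "\<not> (f [x,y] = x \<or> f [x,y] = y)"
  define z where "z = f [x,y]"
  have zX: "z \<in> X" using F2_X[OF f x y] z_def by simp
  have xy: "x \<noteq> y" using ne F2_idem[OF f x] by auto
  have zxy: "z \<noteq> x" "z \<noteq> y" using ne z_def by auto
  have c2: "card {x,y} \<le> k" using k2 xy by simp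
  have "card (X - {z}) = card X - 1" using zX fin by simp
  then have "k \<le> card (X - {z})" using kX by simp
  then obtain Y where Y: "{x,y} \<subseteq> Y" "Y \<subseteq> X - {z}" "card Y = k"
    using card_sub_between[of "X - {z}" "{x,y}" k] fin c2 x y zxy by auto
  have Yk: "Y \<in> ksubsets X k" using Y by (auto simp: ksubsets_def)
  obtain c where c: "c \<in> C" using Cne by auto
  have real: "\<exists>c'\<in>C. c' Y = u" if u: "u \<in> Y" for u
  proof -
    define w where "w = c Y"
    have w: "w \<in> Y" using C_val[OF c Yk] w_def by simp
    define p where "p = Transposition.transpose w u"
    have wuX: "w \<in> X" "u \<in> X" using w u Y by auto
    have p: "bij_betw p X X" using p_def wuX by simp
    have pY: "p ` Y = Y" using p_def w u by simp
    have "inv_into X p w = u"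
      using bij_betw_imp_inj_on[OF p] wuX by (intro inv_into_f_eq) (auto simp: p_def)
    then have "perm_act X k p c Y = u" using Yk pY by (simp add: perm_act_def w_def)
    then show ?thesis using C_perm[OF c p] by blast
  qed
  have "x \<in> Y" "y \<in> Y" using Y by auto
  then obtain c1 c2 where cc: "c1 \<in> C" "c2 \<in> C" "c1 Y = x" "c2 Y = y"
    using real[of x] real[of y] by metis
  have "(\<lambda>Y. if Y \<in> ksubsets X k then f [c1 Y, c2 Y] else undefined) Y \<in> Y"
    using C_val[OF F2_C[OF f cc(1,2)] Yk] .
  then have "f [x,y] \<in> Y" using Yk cc by simp
  moreover have "z \<notin> Y" using Y(2) by blast
  ultimately show False unfolding z_def by blast
qed

end

definition lef :: "'a set \<Rightarrow> nat \<Rightarrow> ('a set \<Rightarrow> 'a) set \<Rightarrow> 'a \<Rightarrow> 'a \<Rightarrow> 'a \<Rightarrow> 'a \<Rightarrow> bool" where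
  "lef X k C x y p q = (\<forall>f\<in>avg_funs X k C 2. f [x,y] = y \<longrightarrow> f [p,q] = q)"

lemma lef_trans: "lef X k C x y p q \<Longrightarrow> lef X k C p q u v \<Longrightarrow> lef X k C x y u v"
  unfolding lef_def by blast

lemma perm3:
  assumes "distinct [a,b,c]" "distinct [x,y,z]" "set [a,b,c] \<subseteq> X" "set [x,y,z] \<subseteq> X"
  shows "\<exists>p. bij_betw p X X \<and> p a = x \<and> p b = y \<and> p c = z"
  using perm_exists[OF assms(1,2) _ assms(3,4)] by auto

lemma perm4:
  assumes "distinct [a,b,c,d]" "distinct [x,y,z,w]" "set [a,b,c,d] \<subseteq> X" "set [x,y,z,w] \<subseteq> X"
  shows "\<exists>p. bij_betw p X X \<and> p a = x \<and> p b = y \<and> p c = z \<and> p d = w"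
  using perm_exists[OF assms(1,2) _ assms(3,4)] by auto

context cfs
begin

lemma proj_val: "x \<in> X \<Longrightarrow> y \<in> X \<Longrightarrow> projf X 0 [x,y] = x \<and> projf X 1 [x,y] = y"
  by (simp add: projf_def tuples2)

lemma comp_val: "x \<in> X \<Longrightarrow> y \<in> X \<Longrightarrow> compf X f g h [x,y] = f [g [x,y], h [x,y]]"
  by (simp add: compf_def tuples2)

lemma P0: "projf X 0 \<in> F2" and P1: "projf X 1 \<in> F2"
  using proj_in by auto

lemma le_conj:
  assumes l: "lef X k C x y p q" and p: "bij_betw \<pi> X X"
    and X: "x \<in> X" "y \<in> X" "p \<in> X" "q \<in> X"
  shows "lef X k C (\<pi> x) (\<pi> y) (\<pi> p) (\<pi> q)"
  unfolding lef_def
proof (intro ballI impI)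
  fix f assume f: "f \<in> F2" and fe: "f [\<pi> x, \<pi> y] = \<pi> y"
  define g where "g = conjf X \<pi> f"
  have g: "g \<in> F2" using conj_in[OF f p] g_def by simp
  have pX: "\<And>u. u \<in> X \<Longrightarrow> \<pi> u \<in> X" using p bij_betwE by blast
  have "g [x,y] = inv_into X \<pi> (\<pi> y)" using X fe by (simp add: g_def conjf_def tuples2)
  also have "\<dots> = y" using bij_betw_inv_into_left[OF p X(2)] .
  finally have "g [p,q] = q" using l g unfolding lef_def by blast
  then have "inv_into X \<pi> (f [\<pi> p, \<pi> q]) = q" using X by (simp add: g_def conjf_def tuples2)
  moreover have "f [\<pi> p, \<pi> q] \<in> X" using F2_X[OF f] pX X by simp
  ultimately show "f [\<pi> p, \<pi> q] = \<pi> q" using bij_betw_inv_into_right[OF p] by metis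
qed

lemma le_rev:
  assumes l: "lef X k C x y p q" and X: "x \<in> X" "y \<in> X" "p \<in> X" "q \<in> X" and pq: "p \<noteq> q"
  shows "lef X k C q p y x"
  unfolding lef_def
proof (intro ballI impI)
  fix f assume f: "f \<in> F2" and fe: "f [q,p] = p"
  define g where "g = compf X f (projf X 1) (projf X 0)"
  have g: "g \<in> F2" using comp_in[OF f P1 P0] g_def by simp
  have gv: "\<And>u v. u \<in> X \<Longrightarrow> v \<in> X \<Longrightarrow> g [u,v] = f [v,u]"
    by (simp add: g_def comp_val projf_def tuples2)
  have "g [p,q] \<noteq> q" using gv[of p q] X fe pq by simp
  then have "g [x,y] \<noteq> y" using l g unfolding lef_def by blast
  then have "g [x,y] = x" using conservative[OF g X(1,2)] by simp
  then show "f [y,x] = x" using gv[of x y] X by simp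
qed

lemma T6_false:
  assumes T6: "\<And>x y z w. distinct [x,y,z,w] \<Longrightarrow> set [x,y,z,w] \<subseteq> X \<Longrightarrow> lef X k C x y z w"
    and f0: "f0 \<in> F2" and X: "u \<in> X" "v \<in> X" "p \<in> X" "q \<in> X"
    and uv: "u \<noteq> v" "f0 [u,v] = v" and pq: "p \<noteq> q" "f0 [p,q] = p"
  shows False
proof -
  obtain z where z: "z \<in> X" "z \<notin> set [u,v,p,q]" using fresh[OF fin, of "[u,v,p,q]"] X6 by auto
  obtain w where w: "w \<in> X" "w \<notin> set [u,v,p,q,z]" using fresh[OF fin, of "[u,v,p,q,z]"] X6 by auto
  have "lef X k C u v z w" using T6[of u v z w] z w uv X by auto
  moreover have "lef X k C z w p q" using T6[of z w p q] z w pq X by auto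
  ultimately have "lef X k C u v p q" by (rule lef_trans)
  then have "f0 [p,q] = q" using f0 uv unfolding lef_def by blast
  then show False using pq by simp
qed

lemma tau2_T6:
  assumes t2: "\<And>x y z. distinct [x,y,z] \<Longrightarrow> set [x,y,z] \<subseteq> X \<Longrightarrow> lef X k C x y x z"
  shows "\<And>x y z w. distinct [x,y,z,w] \<Longrightarrow> set [x,y,z,w] \<subseteq> X \<Longrightarrow> lef X k C x y z w"
proof -
  fix x y z w assume d: "distinct [x,y,z,w]" and s: "set [x,y,z,w] \<subseteq> X"
  have "lef X k C x y x w" using t2[of x y w] d s by auto
  moreover have "lef X k C x w z w"
  proof -
    have "lef X k C w z w x" using t2[of w z x] d s by auto
    from le_rev[OF this] show ?thesis using d s by auto
  qed
  ultimately show "lef X k C x y z w" by (rule lef_trans)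
qed

lemma sep:
  assumes f0: "f0 \<in> F2" and X0: "u \<in> X" "v \<in> X" "p0 \<in> X" "q0 \<in> X"
    and uv: "u \<noteq> v" "f0 [u,v] = v" and pq0: "p0 \<noteq> q0" "f0 [p0,q0] = p0"
    and a: "a1 \<in> X" "a2 \<in> X" "a1 \<noteq> a2"
    and pq: "p \<in> X" "q \<in> X" "p \<noteq> q" "\<not> (p = a1 \<and> q = a2)" "\<not> (p = a2 \<and> q = a1)"
  shows "\<not> lef X k C a1 a2 p q"
proof
  assume l: "lef X k C a1 a2 p q"
  have T6: "\<And>x y z w. distinct [x,y,z,w] \<Longrightarrow> set [x,y,z,w] \<subseteq> X \<Longrightarrow> lef X k C x y z w"
  proof -
    have gen3: "lef X k C x y (\<pi>0 x y z) (\<pi>1 x y z)"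
      if h: "distinct [x,y,z]" "set [x,y,z] \<subseteq> X" "distinct [a1,a2,c]" "c \<in> X"
         "\<forall>\<pi>. \<pi> a1 = x \<and> \<pi> a2 = y \<and> \<pi> c = z \<longrightarrow> \<pi> p = \<pi>0 x y z \<and> \<pi> q = \<pi>1 x y z"
      for x y z c \<pi>0 \<pi>1
    proof -
      obtain \<pi> where \<pi>: "bij_betw \<pi> X X" "\<pi> a1 = x" "\<pi> a2 = y" "\<pi> c = z"
        using perm3[of a1 a2 c x y z X] h a by auto
      have "lef X k C (\<pi> a1) (\<pi> a2) (\<pi> p) (\<pi> q)" using le_conj[OF l \<pi>(1) a(1,2) pq(1,2)] .
      then show ?thesis using h(5) \<pi> by auto
    qed
    consider "p = a1" | "p = a2" | "p \<notin> {a1,a2}" "q = a1" | "p \<notin> {a1,a2}" "q = a2"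
      | "p \<notin> {a1,a2}" "q \<notin> {a1,a2}" by blast
    then show "\<And>x y z w. distinct [x,y,z,w] \<Longrightarrow> set [x,y,z,w] \<subseteq> X \<Longrightarrow> lef X k C x y z w"
    proof cases
      case 1
      then have q: "q \<notin> {a1,a2}" using pq by auto
      have "\<And>x y z. distinct [x,y,z] \<Longrightarrow> set [x,y,z] \<subseteq> X \<Longrightarrow> lef X k C x y x z"
        using gen3[of _ _ _ q "\<lambda>x y z. x" "\<lambda>x y z. z"] q pq 1 a by auto
      then show "\<And>x y z w. distinct [x,y,z,w] \<Longrightarrow> set [x,y,z,w] \<subseteq> X \<Longrightarrow> lef X k C x y z w"
        by (rule tau2_T6)
    next
      case 2
      then have q: "q \<notin> {a1,a2}" using pq by auto
      have t4: "\<And>x y z. distinct [x,y,z] \<Longrightarrow> set [x,y,z] \<subseteq> X \<Longrightarrow> lef X k C x y y z"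
        using gen3[of _ _ _ q "\<lambda>x y z. y" "\<lambda>x y z. z"] q pq 2 a by auto
      fix x y z w assume d: "distinct [x,y,z,w]" and s: "set [x,y,z,w] \<subseteq> X"
      have "lef X k C x y y z" using t4[of x y z] d s by auto
      moreover have "lef X k C y z z w" using t4[of y z w] d s by auto
      ultimately show "lef X k C x y z w" by (rule lef_trans)
    next
      case 3
      have t5: "\<And>x y z. distinct [x,y,z] \<Longrightarrow> set [x,y,z] \<subseteq> X \<Longrightarrow> lef X k C x y z x"
        using gen3[of _ _ _ p "\<lambda>x y z. z" "\<lambda>x y z. x"] pq 3 a by auto
      fix x y z w assume d: "distinct [x,y,z,w]" and s: "set [x,y,z,w] \<subseteq> X"
      have "lef X k C x y w x" using t5[of x y w] d s by auto
      moreover have "lef X k C w x z w" using t5[of w x z] d s by auto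
      ultimately show "lef X k C x y z w" by (rule lef_trans)
    next
      case 4
      have t3: "\<And>x y z. distinct [x,y,z] \<Longrightarrow> set [x,y,z] \<subseteq> X \<Longrightarrow> lef X k C x y z y"
        using gen3[of _ _ _ p "\<lambda>x y z. z" "\<lambda>x y z. y"] pq 4 a by auto
      have "\<And>x y z. distinct [x,y,z] \<Longrightarrow> set [x,y,z] \<subseteq> X \<Longrightarrow> lef X k C x y x z"
      proof -
        fix x y z assume d: "distinct [x,y,z]" and s: "set [x,y,z] \<subseteq> X"
        have "lef X k C z x y x" using t3[of z x y] d s by auto
        from le_rev[OF this] show "lef X k C x y x z" using d s by auto
      qed
      then show "\<And>x y z w. distinct [x,y,z,w] \<Longrightarrow> set [x,y,z,w] \<subseteq> X \<Longrightarrow> lef X k C x y z w"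
        by (rule tau2_T6)
    next
      case 5
      fix x y z w assume d: "distinct [x,y,z,w]" and s: "set [x,y,z,w] \<subseteq> X"
      obtain \<pi> where \<pi>: "bij_betw \<pi> X X" "\<pi> a1 = x" "\<pi> a2 = y" "\<pi> p = z" "\<pi> q = w"
        using perm4[of a1 a2 p q x y z w X] d s a pq 5 by auto
      have "lef X k C (\<pi> a1) (\<pi> a2) (\<pi> p) (\<pi> q)" using le_conj[OF l \<pi>(1) a(1,2) pq(1,2)] .
      then show "lef X k C x y z w" using \<pi> by simp
    qed
  qed
  show False using T6_false[OF T6 f0 X0 uv pq0] by blast
qed

end

context cfs
begin

lemma sepT:
  assumes f0: "f0 \<in> F2" and X0: "u \<in> X" "v \<in> X" "p0 \<in> X" "q0 \<in> X"
    and uv: "u \<noteq> v" "f0 [u,v] = v" and pq0: "p0 \<noteq> q0" "f0 [p0,q0] = p0"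
    and a: "a1 \<in> X" "a2 \<in> X" "a1 \<noteq> a2"
    and pq: "p \<in> X" "q \<in> X" "p \<noteq> q" "\<not> {p,q} \<subseteq> {a1,a2}"
  shows "\<exists>g\<in>F2. g [a1,a2] = a2 \<and> g [a2,a1] = a1 \<and> g [p,q] = p"
proof -
  have n1: "\<not> lef X k C a1 a2 p q" using sep[OF f0 X0 uv pq0 a pq(1-3)] pq by auto
  have n2: "\<not> lef X k C a2 a1 p q" using sep[OF f0 X0 uv pq0 a(2,1) _ pq(1-3)] pq a by auto
  obtain g1 where g1: "g1 \<in> F2" "g1 [a1,a2] = a2" "g1 [p,q] \<noteq> q" using n1 unfolding lef_def by blast
  obtain g2 where g2: "g2 \<in> F2" "g2 [a2,a1] = a1" "g2 [p,q] \<noteq> q" using n2 unfolding lef_def by blast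
  have g1p: "g1 [p,q] = p" using conservative[OF g1(1) pq(1,2)] g1(3) by simp
  have g2p: "g2 [p,q] = p" using conservative[OF g2(1) pq(1,2)] g2(3) by simp
  define g where "g = compf X g2 g1 (projf X 1)"
  have g: "g \<in> F2" using comp_in[OF g2(1) g1(1) P1] g_def by simp
  have gv: "\<And>x y. x \<in> X \<Longrightarrow> y \<in> X \<Longrightarrow> g [x,y] = g2 [g1 [x,y], y]"
    by (simp add: g_def comp_val projf_def tuples2)
  have "g [a1,a2] = a2" using gv[of a1 a2] a g1(2) F2_idem[OF g2(1)] by simp
  moreover have "g [a2,a1] = a1"
    using gv[of a2 a1] a conservative[OF g1(1) a(2) a(1)] F2_idem[OF g2(1)] g2(2) by auto
  moreover have "g [p,q] = p" using gv[of p q] pq g1p g2p by simp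
  ultimately show ?thesis using g by blast
qed

lemma induct_E:
  assumes S: "\<And>p q. (p,q) \<in> E0 \<Longrightarrow> \<exists>g\<in>F2. g [a1,a2] = a2 \<and> g [a2,a1] = a1 \<and> g [p,q] = p"
    and E0: "E0 \<subseteq> X \<times> X" and a: "a1 \<in> X" "a2 \<in> X" and fE: "finite E"
  shows "E \<subseteq> E0 \<Longrightarrow> \<exists>g\<in>F2. g [a1,a2] = a2 \<and> g [a2,a1] = a1 \<and> (\<forall>(p,q)\<in>E. g [p,q] = p)"
  using fE
proof (induction E rule: finite_induct)
  case empty
  have "projf X 1 [a1,a2] = a2" "projf X 1 [a2,a1] = a1" using a by (simp_all add: projf_def tuples2)
  then show ?case using P1 by blast
next
  case (insert e F)
  obtain p q where e: "e = (p,q)" by (cases e)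
  obtain h where h: "h \<in> F2" "h [a1,a2] = a2" "h [a2,a1] = a1" "\<forall>(p,q)\<in>F. h [p,q] = p"
    using insert by auto
  obtain g where g: "g \<in> F2" "g [a1,a2] = a2" "g [a2,a1] = a1" "g [p,q] = p"
    using S[of p q] insert e by auto
  have pqX: "p \<in> X" "q \<in> X" using insert e E0 by auto
  define m where "m = compf X h (projf X 0) g"
  have m: "m \<in> F2" using comp_in[OF h(1) P0 g(1)] m_def by simp
  have mv: "\<And>x y. x \<in> X \<Longrightarrow> y \<in> X \<Longrightarrow> m [x,y] = h [x, g [x,y]]"
    by (simp add: m_def comp_val projf_def tuples2)
  have "m [a1,a2] = a2" using mv[of a1 a2] a g h by simp
  moreover have "m [a2,a1] = a1" using mv[of a2 a1] a g h by simp
  moreover have "m [p,q] = p" using mv[of p q] pqX g F2_idem[OF h(1)] by simp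
  moreover have "\<forall>(p',q')\<in>F. m [p',q'] = p'"
  proof (intro ballI, clarify)
    fix p' q' assume pq': "(p',q') \<in> F"
    then have X': "p' \<in> X" "q' \<in> X" using insert E0 by auto
    have "g [p',q'] = p' \<or> g [p',q'] = q'" using conservative[OF g(1) X'] .
    then show "m [p',q'] = p'" using mv[OF X'] F2_idem[OF h(1) X'(1)] h(4) pq' by auto
  qed
  ultimately show ?case using m e by blast
qed

end

theorem claim13p4:
  fixes X :: "'a set" and k :: nat and C :: "('a set \<Rightarrow> 'a) set" and a1 a2 :: 'a
  assumes "finite X" and "card X \<ge> 5"
    and "5 < k" and "k + 5 < card X"
    and "C \<noteq> {}" and "symmetric_family X k C"
    and "r_F X k C = 2"
    and "a1 \<in> X" and "a2 \<in> X" and "a1 \<noteq> a2"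
  shows "\<exists>f \<in> avg_funs X k C 2.
           f [a1, a2] = a2 \<and>
           (\<forall>b1 \<in> X. \<forall>b2 \<in> X. b1 \<noteq> b2 \<and> {b1, b2} \<subseteq> {a1, a2} \<longrightarrow> f [b1, b2] = b2) \<and>
           (\<forall>b1 \<in> X. \<forall>b2 \<in> X. b1 \<noteq> b2 \<and> \<not> {b1, b2} \<subseteq> {a1, a2} \<longrightarrow> f [b1, b2] = b1)"
proof -
  interpret cfs X k C
    using assms by unfold_locales auto
  have ex: "\<exists>r. \<exists>f \<in> avg_funs X k C r. \<not> monarchy X r f"
    using assms(7) unfolding r_F_def by (metis zero_neq_numeral)
  then have "(LEAST r. \<exists>f \<in> avg_funs X k C r. \<not> monarchy X r f) = 2"
    using assms(7) unfolding r_F_def by simp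
  moreover have "\<exists>f \<in> avg_funs X k C (LEAST r. \<exists>f \<in> avg_funs X k C r. \<not> monarchy X r f).
      \<not> monarchy X (LEAST r. \<exists>f \<in> avg_funs X k C r. \<not> monarchy X r f) f"
    using LeastI_ex[OF ex] .
  ultimately obtain f0 where f0: "f0 \<in> F2" "\<not> monarchy X 2 f0" by auto
  have "\<not> (\<forall>xs\<in>tuples X 2. f0 xs = xs ! 0)" using f0(2) unfolding monarchy_def by auto
  then obtain u v where uvX: "u \<in> X" "v \<in> X" and uv0: "f0 [u,v] \<noteq> u"
    using tuples2E by fastforce
  have uv: "u \<noteq> v" "f0 [u,v] = v" using uv0 conservative[OF f0(1) uvX] F2_idem[OF f0(1) uvX(1)] by auto
  have "\<not> (\<forall>xs\<in>tuples X 2. f0 xs = xs ! 1)" using f0(2) unfolding monarchy_def by auto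
  then obtain p q where pqX: "p \<in> X" "q \<in> X" and pq0: "f0 [p,q] \<noteq> q"
    using tuples2E by fastforce
  have pq: "p \<noteq> q" "f0 [p,q] = p" using pq0 conservative[OF f0(1) pqX] F2_idem[OF f0(1) pqX(1)] by auto
  define E where "E = {(b1,b2). b1 \<in> X \<and> b2 \<in> X \<and> b1 \<noteq> b2 \<and> \<not> {b1,b2} \<subseteq> {a1,a2}}"
  have EX: "E \<subseteq> X \<times> X" unfolding E_def by auto
  have fE: "finite E" using finite_subset[OF EX] assms(1) by blast
  have S: "\<exists>g\<in>F2. g [a1,a2] = a2 \<and> g [a2,a1] = a1 \<and> g [b1,b2] = b1" if "(b1,b2) \<in> E" for b1 b2
    using sepT[OF f0(1) uvX pqX uv pq assms(8,9,10)] that unfolding E_def by auto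
  obtain g where g: "g \<in> F2" "g [a1,a2] = a2" "g [a2,a1] = a1" "\<forall>(b1,b2)\<in>E. g [b1,b2] = b1"
    using induct_E[OF S EX assms(8,9) fE] by blast
  have c2: "\<forall>b1 \<in> X. \<forall>b2 \<in> X. b1 \<noteq> b2 \<and> {b1, b2} \<subseteq> {a1, a2} \<longrightarrow> g [b1, b2] = b2"
  proof (intro ballI impI)
    fix b1 b2 assume "b1 \<in> X" "b2 \<in> X" "b1 \<noteq> b2 \<and> {b1, b2} \<subseteq> {a1, a2}"
    then have "(b1 = a1 \<and> b2 = a2) \<or> (b1 = a2 \<and> b2 = a1)" by auto
    then show "g [b1,b2] = b2" using g by auto
  qed
  have c3: "\<forall>b1 \<in> X. \<forall>b2 \<in> X. b1 \<noteq> b2 \<and> \<not> {b1, b2} \<subseteq> {a1, a2} \<longrightarrow> g [b1, b2] = b1"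
    using g(4) unfolding E_def by auto
  show ?thesis using g(1,2) c2 c3 by blast
qed

end
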